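(* Let $U$ be a subgroup of $G^*$, let $(p_j)_{j=1}^R\in\mathcal{P}^R$ be a system of representatives of the $U$-orbits of $\mathcal{P}$ (i.e. the sets $p_j^U=\{p_j^\varphi:\varphi\in U\}$, $j=1,\dots,R$, are exactly the distinct orbits $\{p^\varphi:\varphi\in U\}$, $p\in\mathcal{P}$), and let $(\mu_j)_{j=1}^R$ be matchings with $\mu_j\in C^U(p_j)$ for every $j$. Then there exists a unique resolute and $U$-symmetric matching mechanism $H$ such that $H(p_j)=\{\mu_j\}$ for every $j\in\{1,\dots,R\}$.
   Context: Fix $n\ge 2$, $W=\{1,\dots,n\}$, $M=\{n+1,\dots,2n\}$, $I=W\cup M$. Permutations compose right-to-left. A preference profile is a function $p$ on $I$ assigning to each $x\in W$ a linear order $p(x)$ on $M$ and to each $y\in M$ a linear order $p(y)$ on $W$; $\mathcal{P}$ is the set of preference profiles. A matching is a permutation $\mu$ of $I$ with $\mu(W)=M$, $\mu(M)=W$, $\mu(\mu(z))=z$; $\mathcal{M}$ is the set of matchings. $G^*=\{\varphi\in\mathrm{Sym}(I):\{\varphi(W),\varphi(M)\}=\{W,M\}\}$. For a linear order $R$ on $X\subseteq I$ and $\varphi\in\mathrm{Sym}(I)$, $\varphi R$ is the relation on $\varphi(X)$ with $(a,b)\in\varphi R$ iff $(\varphi^{-1}(a),\varphi^{-1}(b))\in R$. For $\varphi\in G^*$, $p^\varphi(z)=\varphi\,p(\varphi^{-1}(z))$ (this defines a group action of $G^*$ on $\mathcal{P}$); $\mu^\varphi=\varphi\mu\varphi^{-1}$;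 $S^\varphi=\{\mu^\varphi:\mu\in S\}$. A matching mechanism is a correspondence $F$ from $\mathcal{P}$ to $\mathcal{M}$; resolute if $|F(p)|=1$ for all $p$; $U$-symmetric if $F(p^\varphi)=F(p)^\varphi$ for all $p$, $\varphi\in U$. $\mathrm{Stab}_U(p)=\{\varphi\in U:p^\varphi=p\}$ and $C^U(p)=\{\mu\in\mathcal{M}:\mu^\varphi=\mu\text{ for all }\varphi\in\mathrm{Stab}_U(p)\}$. *)

theory Defs
  imports "HOL-Combinatorics.Permutations"
begin

type_synonym profile = "nat \<Rightarrow> (nat \<times> nat) set"
type_synonym matching = "nat \<Rightarrow> nat"

definition Wset :: "nat \<Rightarrow> nat set" where "Wset n = {1..n}"
definition Mset :: "nat \<Rightarrow> nat set" where "Mset n = {n+1..2*n}"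
definition Iset :: "nat \<Rightarrow> nat set" where "Iset n = Wset n \<union> Mset n"

text \<open>Preference profiles. Linear orders are reflexive linear orders (linear_order_on).
  Outside the agent set I the profile is fixed to the empty relation (functions in HOL are total).\<close>
definition profiles :: "nat \<Rightarrow> profile set" where
  "profiles n = {p. (\<forall>x\<in>Wset n. linear_order_on (Mset n) (p x))
                  \<and> (\<forall>y\<in>Mset n. linear_order_on (Wset n) (p y))
                  \<and> (\<forall>z. z \<notin> Iset n \<longrightarrow> p z = {})}"

definition matchings :: "nat \<Rightarrow> matching set" where
  "matchings n = {\<mu>. \<mu> permutes Iset n \<and> \<mu> ` Wset n = Mset n \<and> \<mu> ` Mset n = Wset n
                    \<and> (\<forall>z\<in>Iset n. \<mu> (\<mu> z) = z)}"

definition Gstar :: "nat \<Rightarrow> (nat \<Rightarrow> nat) set" where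
  "Gstar n = {\<phi>. \<phi> permutes Iset n \<and> {\<phi> ` Wset n, \<phi> ` Mset n} = {Wset n, Mset n}}"

definition is_subgroup_Gstar :: "nat \<Rightarrow> (nat \<Rightarrow> nat) set \<Rightarrow> bool" where
  "is_subgroup_Gstar n U \<longleftrightarrow> U \<subseteq> Gstar n \<and> id \<in> U
     \<and> (\<forall>\<phi>\<in>U. \<forall>\<psi>\<in>U. \<phi> \<circ> \<psi> \<in> U) \<and> (\<forall>\<phi>\<in>U. inv \<phi> \<in> U)"

definition act_rel :: "(nat \<Rightarrow> nat) \<Rightarrow> (nat \<times> nat) set \<Rightarrow> (nat \<times> nat) set" where
  "act_rel \<phi> R = {(a, b). (inv \<phi> a, inv \<phi> b) \<in> R}"

definition act_prof :: "(nat \<Rightarrow> nat) \<Rightarrow> profile \<Rightarrow> profile" where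
  "act_prof \<phi> p = (\<lambda>z. act_rel \<phi> (p (inv \<phi> z)))"

definition act_match :: "(nat \<Rightarrow> nat) \<Rightarrow> matching \<Rightarrow> matching" where
  "act_match \<phi> \<mu> = \<phi> \<circ> \<mu> \<circ> inv \<phi>"

definition orbit_U :: "(nat \<Rightarrow> nat) set \<Rightarrow> profile \<Rightarrow> profile set" where
  "orbit_U U p = {act_prof \<phi> p | \<phi>. \<phi> \<in> U}"

definition Stab :: "(nat \<Rightarrow> nat) set \<Rightarrow> profile \<Rightarrow> (nat \<Rightarrow> nat) set" where
  "Stab U p = {\<phi> \<in> U. act_prof \<phi> p = p}"

definition CU :: "nat \<Rightarrow> (nat \<Rightarrow> nat) set \<Rightarrow> profile \<Rightarrow> matching set" where
  "CU n U p = {\<mu> \<in> matchings n. \<forall>\<phi>\<in>Stab U p. act_match \<phi> \<mu> = \<mu>}"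

text \<open>A matching mechanism: a correspondence from profiles to matchings; it is the
  empty set outside the set of profiles (extensional representation of a map on P).\<close>
definition mechanism :: "nat \<Rightarrow> (profile \<Rightarrow> matching set) \<Rightarrow> bool" where
  "mechanism n F \<longleftrightarrow> (\<forall>p\<in>profiles n. F p \<subseteq> matchings n) \<and> (\<forall>p. p \<notin> profiles n \<longrightarrow> F p = {})"

definition resolute :: "nat \<Rightarrow> (profile \<Rightarrow> matching set) \<Rightarrow> bool" where
  "resolute n F \<longleftrightarrow> (\<forall>p\<in>profiles n. card (F p) = 1)"

definition U_symmetric :: "nat \<Rightarrow> (nat \<Rightarrow> nat) set \<Rightarrow> (profile \<Rightarrow> matching set) \<Rightarrow> bool" where
  "U_symmetric n U F \<longleftrightarrow>
     (\<forall>p\<in>profiles n. \<forall>\<phi>\<in>U. F (act_prof \<phi> p) = act_match \<phi> ` F p)"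

end

theory Submission
  imports Defs
begin

lemma bij_img_iff: "bij f \<Longrightarrow> (y \<in> f ` A) = (inv f y \<in> A)"
  by (metis bij_inv_eq_iff image_iff)

lemma lin_act:
  assumes b: "bij f" and l: "linear_order_on A r"
  shows "linear_order_on (f ` A) (act_rel f r)"
proof -
  have i1: "\<And>x. inv f (f x) = x" using b by (simp add: bij_is_inj)
  have i2: "\<And>x. f (inv f x) = x" using b by (simp add: bij_is_surj surj_f_inv_f)
  have ii: "\<And>x y. inv f x = inv f y \<Longrightarrow> x = y" by (metis i2)
  note ba = bij_img_iff[OF b]
  have r: "r \<subseteq> A \<times> A" "\<And>x. x \<in> A \<Longrightarrow> (x, x) \<in> r" "trans r" "antisym r"
      "\<And>x y. x \<in> A \<Longrightarrow> y \<in> A \<Longrightarrow> x \<noteq> y \<Longrightarrow> (x, y) \<in> r \<or> (y, x) \<in> r"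
    using l unfolding linear_order_on_def partial_order_on_def preorder_on_def refl_on_def total_on_def
    by blast+
  have m: "\<And>a b. ((a, b) \<in> act_rel f r) = ((inv f a, inv f b) \<in> r)" unfolding act_rel_def by simp
  have s1: "act_rel f r \<subseteq> f ` A \<times> f ` A"
  proof
    fix z assume "z \<in> act_rel f r"
    then obtain a b where z: "z = (a, b)" "(inv f a, inv f b) \<in> r" using m by (cases z) auto
    then have "inv f a \<in> A" "inv f b \<in> A" using r(1) by auto
    then show "z \<in> f ` A \<times> f ` A" using z(1) ba by simp
  qed
  have s2: "refl_on (f ` A) (act_rel f r)" unfolding refl_on_def
  proof
    fix x assume "x \<in> f ` A"
    then have "inv f x \<in> A" using ba by simp
    then show "(x, x) \<in> act_rel f r" using m r(2) by simp
  qed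
  have s3: "trans (act_rel f r)" unfolding trans_def m
    using r(3) unfolding trans_def by blast
  have s4: "antisym (act_rel f r)"
  proof (rule antisymI)
    fix x y assume "(x, y) \<in> act_rel f r" "(y, x) \<in> act_rel f r"
    then have "inv f x = inv f y" using r(4) m unfolding antisym_def by blast
    then show "x = y" by (rule ii)
  qed
  have s5: "total_on (f ` A) (act_rel f r)" unfolding total_on_def m
  proof (intro ballI impI)
    fix x y assume "x \<in> f ` A" "y \<in> f ` A" "x \<noteq> y"
    then have "inv f x \<in> A" "inv f y \<in> A" "inv f x \<noteq> inv f y" using ba ii by auto
    then show "(inv f x, inv f y) \<in> r \<or> (inv f y, inv f x) \<in> r" using r(5) by blast
  qed
  show ?thesis unfolding linear_order_on_def partial_order_on_def preorder_on_def
    using s1 s2 s3 s4 s5 by blast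
qed

lemma Gstar_bij: "\<phi> \<in> Gstar n \<Longrightarrow> bij \<phi>"
  unfolding Gstar_def using permutes_bij by blast

lemma Gstar_cases:
  assumes "\<phi> \<in> Gstar n"
  obtains "\<phi> ` Wset n = Wset n" "\<phi> ` Mset n = Mset n"
        | "\<phi> ` Wset n = Mset n" "\<phi> ` Mset n = Wset n"
  using assms unfolding Gstar_def by (auto simp: doubleton_eq_iff)

lemma act_prof_profiles:
  assumes g: "\<phi> \<in> Gstar n" and p: "p \<in> profiles n"
  shows "act_prof \<phi> p \<in> profiles n"
proof -
  have b: "bij \<phi>" using g by (rule Gstar_bij)
  have pm: "\<phi> permutes Iset n" using g unfolding Gstar_def by blast
  have ipm: "inv \<phi> permutes Iset n" using permutes_inv[OF pm] .
  have i2: "\<And>x. \<phi> (inv \<phi> x) = x" using surj_f_inv_f[OF bij_is_surj[OF b]] .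
  note ba = bij_img_iff[OF b]
  have out: "\<And>z. z \<notin> Iset n \<Longrightarrow> act_prof \<phi> p z = {}"
  proof -
    fix z assume z: "z \<notin> Iset n"
    have "inv \<phi> z = z" using ipm z by (simp add: permutes_not_in)
    then show "act_prof \<phi> p z = {}" using p z unfolding act_prof_def profiles_def act_rel_def by auto
  qed
  from g show ?thesis
  proof (cases rule: Gstar_cases)
    case 1
    have "\<forall>x\<in>Wset n. linear_order_on (Mset n) (act_prof \<phi> p x)"
    proof
      fix x assume "x \<in> Wset n"
      then have "inv \<phi> x \<in> Wset n" using 1 ba by metis
      then have "linear_order_on (\<phi> ` Mset n) (act_rel \<phi> (p (inv \<phi> x)))"
        using p lin_act[OF b] unfolding profiles_def by blast
      then show "linear_order_on (Mset n) (act_prof \<phi> p x)" using 1 by (simp add: act_prof_def)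
    qed
    moreover have "\<forall>x\<in>Mset n. linear_order_on (Wset n) (act_prof \<phi> p x)"
    proof
      fix x assume "x \<in> Mset n"
      then have "inv \<phi> x \<in> Mset n" using 1 ba by metis
      then have "linear_order_on (\<phi> ` Wset n) (act_rel \<phi> (p (inv \<phi> x)))"
        using p lin_act[OF b] unfolding profiles_def by blast
      then show "linear_order_on (Wset n) (act_prof \<phi> p x)" using 1 by (simp add: act_prof_def)
    qed
    ultimately show ?thesis using out unfolding profiles_def by blast
  next
    case 2
    have "\<forall>x\<in>Wset n. linear_order_on (Mset n) (act_prof \<phi> p x)"
    proof
      fix x assume "x \<in> Wset n"
      then have "inv \<phi> x \<in> Mset n" using 2 ba by metis
      then have "linear_order_on (\<phi> ` Wset n) (act_rel \<phi> (p (inv \<phi> x)))"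
        using p lin_act[OF b] unfolding profiles_def by blast
      then show "linear_order_on (Mset n) (act_prof \<phi> p x)" using 2 by (simp add: act_prof_def)
    qed
    moreover have "\<forall>x\<in>Mset n. linear_order_on (Wset n) (act_prof \<phi> p x)"
    proof
      fix x assume "x \<in> Mset n"
      then have "inv \<phi> x \<in> Wset n" using 2 ba by metis
      then have "linear_order_on (\<phi> ` Mset n) (act_rel \<phi> (p (inv \<phi> x)))"
        using p lin_act[OF b] unfolding profiles_def by blast
      then show "linear_order_on (Wset n) (act_prof \<phi> p x)" using 2 by (simp add: act_prof_def)
    qed
    ultimately show ?thesis using out unfolding profiles_def by blast
  qed
qed

lemma act_match_matchings:
  assumes g: "\<phi> \<in> Gstar n" and m: "\<mu> \<in> matchings n"
  shows "act_match \<phi> \<mu> \<in> matchings n"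
proof -
  have b: "bij \<phi>" using g by (rule Gstar_bij)
  have pm: "\<phi> permutes Iset n" using g unfolding Gstar_def mem_Collect_eq by blast
  have ipm: "inv \<phi> permutes Iset n" using permutes_inv[OF pm] .
  have i1: "\<And>x. inv \<phi> (\<phi> x) = x" using inv_f_f[OF bij_is_inj[OF b]] .
  have mp: "\<mu> permutes Iset n" using m unfolding matchings_def mem_Collect_eq by blast
  have p: "act_match \<phi> \<mu> permutes Iset n"
    unfolding act_match_def by (intro permutes_compose[OF ipm] permutes_compose[OF mp pm])
  have ip: "\<And>z. z \<in> Iset n \<Longrightarrow> inv \<phi> z \<in> Iset n" by (simp add: permutes_in_image[OF ipm])
  have inv_img: "\<And>A. inv \<phi> ` (\<phi> ` A) = A" using image_inv_f_f[OF bij_is_inj[OF b]] .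
  have i2: "\<And>x. \<phi> (inv \<phi> x) = x" using surj_f_inv_f[OF bij_is_surj[OF b]] .
  have mi: "\<And>z. z \<in> Iset n \<Longrightarrow> \<mu> (\<mu> z) = z" using m unfolding matchings_def mem_Collect_eq by blast
  have "\<forall>z\<in>Iset n. act_match \<phi> \<mu> (act_match \<phi> \<mu> z) = z"
  proof
    fix z assume z: "z \<in> Iset n"
    have "\<mu> (\<mu> (inv \<phi> z)) = inv \<phi> z" using mi[OF ip[OF z]] .
    then show "act_match \<phi> \<mu> (act_match \<phi> \<mu> z) = z" unfolding act_match_def by (simp add: i1 i2)
  qed
  moreover have "act_match \<phi> \<mu> ` Wset n = Mset n \<and> act_match \<phi> \<mu> ` Mset n = Wset n"
  proof -
    have e: "\<And>A. act_match \<phi> \<mu> ` A = \<phi> ` \<mu> ` inv \<phi> ` A" unfolding act_match_def by (simp add: image_comp)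
    have w: "\<mu> ` Wset n = Mset n" "\<mu> ` Mset n = Wset n" using m unfolding matchings_def mem_Collect_eq by blast+
    from g show ?thesis
    proof (cases rule: Gstar_cases)
      case 1
      have iW: "inv \<phi> ` Wset n = Wset n" using inv_img[of "Wset n"] 1 by simp
      have iM: "inv \<phi> ` Mset n = Mset n" using inv_img[of "Mset n"] 1 by simp
      show ?thesis unfolding e iW iM w 1 by simp
    next
      case 2
      have iW: "inv \<phi> ` Wset n = Mset n" using inv_img[of "Mset n"] 2 by simp
      have iM: "inv \<phi> ` Mset n = Wset n" using inv_img[of "Wset n"] 2 by simp
      show ?thesis unfolding e iW iM w 2 by simp
    qed
  qed
  ultimately show ?thesis using p unfolding matchings_def mem_Collect_eq by blast
qed

lemma act_prof_comp: "bij \<phi> \<Longrightarrow> bij \<psi> \<Longrightarrow> act_prof (\<phi> \<circ> \<psi>) p = act_prof \<phi> (act_prof \<psi> p)"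
  unfolding act_prof_def act_rel_def by (simp add: o_inv_distrib)

lemma act_match_comp: "bij \<phi> \<Longrightarrow> bij \<psi> \<Longrightarrow> act_match (\<phi> \<circ> \<psi>) m = act_match \<phi> (act_match \<psi> m)"
  unfolding act_match_def by (simp add: o_inv_distrib o_assoc)

lemma act_prof_id[simp]: "act_prof id p = p"
  unfolding act_prof_def act_rel_def by simp

lemma act_match_id[simp]: "act_match id m = m"
  unfolding act_match_def by simp


theorem theorem10:
  fixes n R :: nat and U :: "(nat \<Rightarrow> nat) set"
    and ps :: "nat \<Rightarrow> profile" and \<mu>s :: "nat \<Rightarrow> matching"
  assumes "n \<ge> 2"
    and "is_subgroup_Gstar n U"
    and "\<forall>j\<in>{1..R}. ps j \<in> profiles n"
    and "inj_on (\<lambda>j. orbit_U U (ps j)) {1..R}"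
    and "(\<lambda>j. orbit_U U (ps j)) ` {1..R} = orbit_U U ` profiles n"
    and "\<forall>j\<in>{1..R}. \<mu>s j \<in> CU n U (ps j)"
  shows "\<exists>!H. mechanism n H \<and> resolute n H \<and> U_symmetric n U H
              \<and> (\<forall>j\<in>{1..R}. H (ps j) = {\<mu>s j})"
proof -
  note sg = assms(2)[unfolded is_subgroup_Gstar_def]
  have UG: "\<And>\<phi>. \<phi> \<in> U \<Longrightarrow> \<phi> \<in> Gstar n" using sg by blast
  have Ub: "\<And>\<phi>. \<phi> \<in> U \<Longrightarrow> bij \<phi>" using UG Gstar_bij by blast
  have Uc: "\<And>\<phi> \<psi>. \<phi> \<in> U \<Longrightarrow> \<psi> \<in> U \<Longrightarrow> \<phi> \<circ> \<psi> \<in> U" using sg by blast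
  have Ui: "\<And>\<phi>. \<phi> \<in> U \<Longrightarrow> inv \<phi> \<in> U" using sg by blast
  have Uid: "id \<in> U" using sg by blast
  have invl: "\<And>\<phi>. \<phi> \<in> U \<Longrightarrow> inv \<phi> \<circ> \<phi> = id" using Ub by (simp add: bij_is_inj)
  have invr: "\<And>\<phi>. \<phi> \<in> U \<Longrightarrow> \<phi> \<circ> inv \<phi> = id" using Ub by (simp add: bij_is_surj surj_iff[symmetric])
  have bk: "\<And>\<phi> q. \<phi> \<in> U \<Longrightarrow> act_prof (inv \<phi>) (act_prof \<phi> q) = q"
  proof -
    fix \<phi> q assume f: "\<phi> \<in> U"
    have "act_prof (inv \<phi>) (act_prof \<phi> q) = act_prof (inv \<phi> \<circ> \<phi>) q"
      using act_prof_comp[OF Ub[OF Ui[OF f]] Ub[OF f]] by simp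
    then show "act_prof (inv \<phi>) (act_prof \<phi> q) = q" using invl[OF f] by simp
  qed
  have orb: "\<And>\<phi> q. \<phi> \<in> U \<Longrightarrow> orbit_U U (act_prof \<phi> q) = orbit_U U q"
  proof -
    fix \<phi> q assume f: "\<phi> \<in> U"
    show "orbit_U U (act_prof \<phi> q) = orbit_U U q"
    proof
      show "orbit_U U (act_prof \<phi> q) \<subseteq> orbit_U U q"
      proof
        fix x assume "x \<in> orbit_U U (act_prof \<phi> q)"
        then obtain \<chi> where c: "\<chi> \<in> U" "x = act_prof \<chi> (act_prof \<phi> q)" unfolding orbit_U_def by blast
        then have "x = act_prof (\<chi> \<circ> \<phi>) q" using act_prof_comp[OF Ub[OF c(1)] Ub[OF f]] by simp
        moreover have "\<chi> \<circ> \<phi> \<in> U" using Uc[OF c(1) f] .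
        ultimately show "x \<in> orbit_U U q" unfolding orbit_U_def by blast
      qed
    next
      show "orbit_U U q \<subseteq> orbit_U U (act_prof \<phi> q)"
      proof
        fix x assume "x \<in> orbit_U U q"
        then obtain \<chi> where c: "\<chi> \<in> U" "x = act_prof \<chi> q" unfolding orbit_U_def by blast
        then have "x = act_prof (\<chi> \<circ> inv \<phi>) (act_prof \<phi> q)"
          using act_prof_comp[OF Ub[OF c(1)] Ub[OF Ui[OF f]]] bk[OF f] by simp
        then show "x \<in> orbit_U U (act_prof \<phi> q)" unfolding orbit_U_def using c f Uc Ui by blast
      qed
    qed
  qed
  have self: "\<And>q. q \<in> orbit_U U q"
  proof -
    fix q have "q = act_prof id q \<and> id \<in> U" using Uid by simp
    then show "q \<in> orbit_U U q" unfolding orbit_U_def by blast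
  qed
  have rep: "\<And>p. p \<in> profiles n \<Longrightarrow> \<exists>j\<in>{1..R}. \<exists>\<phi>\<in>U. act_prof \<phi> (ps j) = p"
  proof -
    fix p assume "p \<in> profiles n"
    then have "orbit_U U p \<in> orbit_U U ` profiles n" by (rule imageI)
    then have "orbit_U U p \<in> (\<lambda>j. orbit_U U (ps j)) ` {1..R}" unfolding assms(5) .
    then obtain j where j: "j \<in> {1..R}" "orbit_U U p = orbit_U U (ps j)" by blast
    then have "p \<in> orbit_U U (ps j)" using self[of p] j(2) by simp
    then show "\<exists>j\<in>{1..R}. \<exists>\<phi>\<in>U. act_prof \<phi> (ps j) = p" using j unfolding orbit_U_def by blast
  qed
  have uniq: "\<And>j j' \<phi> \<psi>. j \<in> {1..R} \<Longrightarrow> j' \<in> {1..R} \<Longrightarrow> \<phi> \<in> U \<Longrightarrow> \<psi> \<in> U \<Longrightarrow>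
      act_prof \<phi> (ps j) = act_prof \<psi> (ps j') \<Longrightarrow> j = j' \<and> act_match \<phi> (\<mu>s j) = act_match \<psi> (\<mu>s j')"
  proof -
    fix j j' \<phi> \<psi> assume j: "j \<in> {1..R}" "j' \<in> {1..R}" and f: "\<phi> \<in> U" "\<psi> \<in> U"
      and e: "act_prof \<phi> (ps j) = act_prof \<psi> (ps j')"
    have "orbit_U U (ps j) = orbit_U U (ps j')" using orb[OF f(1), of "ps j"] orb[OF f(2), of "ps j'"] e by simp
    then have jj: "j = j'" using assms(4) j by (meson inj_onD)
    define \<chi> where "\<chi> = inv \<psi> \<circ> \<phi>"
    have cU: "\<chi> \<in> U" unfolding \<chi>_def using f Uc Ui by blast
    have "act_prof \<chi> (ps j) = act_prof (inv \<psi>) (act_prof \<phi> (ps j))" unfolding \<chi>_def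
      using act_prof_comp[OF Ub[OF Ui[OF f(2)]] Ub[OF f(1)]] by simp
    also have "\<dots> = ps j" using e jj bk[OF f(2)] by simp
    finally have "act_prof \<chi> (ps j) = ps j" .
    then have "\<chi> \<in> Stab U (ps j)" using cU unfolding Stab_def by blast
    then have s: "act_match \<chi> (\<mu>s j) = \<mu>s j" using assms(6) j unfolding CU_def by blast
    have "act_match \<psi> (act_match \<chi> (\<mu>s j)) = act_match (\<psi> \<circ> \<chi>) (\<mu>s j)"
      using act_match_comp[OF Ub[OF f(2)] Ub[OF cU]] by simp
    also have "\<psi> \<circ> \<chi> = \<phi>" unfolding \<chi>_def using invr[OF f(2)] by (simp add: o_assoc)
    finally show "j = j' \<and> act_match \<phi> (\<mu>s j) = act_match \<psi> (\<mu>s j')" using s jj by simp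
  qed
  define H where "H p = (if p \<in> profiles n then {act_match \<phi> (\<mu>s j) | j \<phi>. j \<in> {1..R} \<and> \<phi> \<in> U \<and> act_prof \<phi> (ps j) = p} else {})" for p
  have Hval: "\<And>j \<phi> p. j \<in> {1..R} \<Longrightarrow> \<phi> \<in> U \<Longrightarrow> act_prof \<phi> (ps j) = p \<Longrightarrow> H p = {act_match \<phi> (\<mu>s j)}"
  proof -
    fix j \<phi> p assume a: "j \<in> {1..R}" "\<phi> \<in> U" "act_prof \<phi> (ps j) = p"
    have "ps j \<in> profiles n" using assms(3) a(1) by blast
    then have "p \<in> profiles n" using act_prof_profiles[OF UG[OF a(2)], of "ps j"] a(3) by simp
    moreover have "{act_match \<phi>' (\<mu>s j') | j' \<phi>'. j' \<in> {1..R} \<and> \<phi>' \<in> U \<and> act_prof \<phi>' (ps j') = p} = {act_match \<phi> (\<mu>s j)}"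
    proof
      show "{act_match \<phi>' (\<mu>s j') | j' \<phi>'. j' \<in> {1..R} \<and> \<phi>' \<in> U \<and> act_prof \<phi>' (ps j') = p} \<subseteq> {act_match \<phi> (\<mu>s j)}"
      proof
        fix x assume "x \<in> {act_match \<phi>' (\<mu>s j') | j' \<phi>'. j' \<in> {1..R} \<and> \<phi>' \<in> U \<and> act_prof \<phi>' (ps j') = p}"
        then obtain j' \<phi>' where b: "j' \<in> {1..R}" "\<phi>' \<in> U" "act_prof \<phi>' (ps j') = p" "x = act_match \<phi>' (\<mu>s j')" by blast
        then show "x \<in> {act_match \<phi> (\<mu>s j)}" using uniq[OF b(1) a(1) b(2) a(2)] a(3) by simp
      qed
      show "{act_match \<phi> (\<mu>s j)} \<subseteq> {act_match \<phi>' (\<mu>s j') | j' \<phi>'. j' \<in> {1..R} \<and> \<phi>' \<in> U \<and> act_prof \<phi>' (ps j') = p}"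
        using a by blast
    qed
    ultimately show "H p = {act_match \<phi> (\<mu>s j)}" unfolding H_def by simp
  qed
  have Hout: "\<And>p. p \<notin> profiles n \<Longrightarrow> H p = {}" unfolding H_def by simp
  have mech: "mechanism n H" unfolding mechanism_def
  proof (intro conjI ballI allI impI)
    fix p assume p: "p \<in> profiles n"
    then obtain j \<phi> where a: "j \<in> {1..R}" "\<phi> \<in> U" "act_prof \<phi> (ps j) = p" using rep[OF p] by blast
    have "\<mu>s j \<in> CU n U (ps j)" using assms(6) a(1) by blast
    then have "\<mu>s j \<in> matchings n" unfolding CU_def by simp
    then have "act_match \<phi> (\<mu>s j) \<in> matchings n" by (rule act_match_matchings[OF UG[OF a(2)]])
    then show "H p \<subseteq> matchings n" using Hval[OF a] by simp
  qed (rule Hout)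
  have res: "resolute n H" unfolding resolute_def
  proof
    fix p assume p: "p \<in> profiles n"
    then obtain j \<phi> where a: "j \<in> {1..R}" "\<phi> \<in> U" "act_prof \<phi> (ps j) = p" using rep[OF p] by blast
    show "card (H p) = 1" using Hval[OF a] by simp
  qed
  have sym: "U_symmetric n U H" unfolding U_symmetric_def
  proof (intro ballI)
    fix p \<psi> assume p: "p \<in> profiles n" and s: "\<psi> \<in> U"
    then obtain j \<phi> where a: "j \<in> {1..R}" "\<phi> \<in> U" "act_prof \<phi> (ps j) = p" using rep[OF p] by blast
    have "act_prof (\<psi> \<circ> \<phi>) (ps j) = act_prof \<psi> p" using a(3) act_prof_comp[OF Ub[OF s] Ub[OF a(2)]] by simp
    then have "H (act_prof \<psi> p) = {act_match (\<psi> \<circ> \<phi>) (\<mu>s j)}" using Hval[OF a(1) Uc[OF s a(2)]] by blast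
    also have "\<dots> = act_match \<psi> ` H p" using Hval[OF a] act_match_comp[OF Ub[OF s] Ub[OF a(2)]] by simp
    finally show "H (act_prof \<psi> p) = act_match \<psi> ` H p" .
  qed
  have fix_: "\<forall>j\<in>{1..R}. H (ps j) = {\<mu>s j}" using Hval[OF _ Uid] by simp
  show ?thesis
  proof (rule ex1I[of _ H])
    show "mechanism n H \<and> resolute n H \<and> U_symmetric n U H \<and> (\<forall>j\<in>{1..R}. H (ps j) = {\<mu>s j})"
      using mech res sym fix_ by blast
  next
    fix H' assume h: "mechanism n H' \<and> resolute n H' \<and> U_symmetric n U H' \<and> (\<forall>j\<in>{1..R}. H' (ps j) = {\<mu>s j})"
    show "H' = H"
    proof
      fix p show "H' p = H p"
      proof (cases "p \<in> profiles n")
        case False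
        have "H' p = {}" using h False unfolding mechanism_def by blast
        then show ?thesis using Hout[OF False] by simp
      next
        case True
        then obtain j \<phi> where a: "j \<in> {1..R}" "\<phi> \<in> U" "act_prof \<phi> (ps j) = p" using rep[OF True] by blast
        have pj: "ps j \<in> profiles n" using assms(3) a(1) by blast
        have "\<forall>p\<in>profiles n. \<forall>\<phi>\<in>U. H' (act_prof \<phi> p) = act_match \<phi> ` H' p" using h unfolding U_symmetric_def by blast
        then have "H' (act_prof \<phi> (ps j)) = act_match \<phi> ` H' (ps j)" using pj a(2) by blast
        moreover have "H' (ps j) = {\<mu>s j}" using h a(1) by blast
        ultimately show ?thesis using a(3) Hval[OF a] by simp
      qed
    qed
  qed
qed

end
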